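(* Let $\epsilon>0$ and $b_1,b_2>\frac12$. For $\lambda\in[1,\infty]$ define the bilinear operator $MP_\lambda$ by $$\widehat{MP_\lambda(u,v)}^\lambda(\tau,\xi,q)=\frac1\lambda\int_{\mathbb{R}^2}\sum_{q_1\in\mathbb{Z}/\lambda}\bigl||(\xi_1,q_1)|^2-|(\xi_2,q_2)|^2\bigr|^{1/2}\hat u^\lambda(\tau_1,\xi_1,q_1)\hat v^\lambda(\tau_2,\xi_2,q_2)\,d\tau_1d\xi_1$$ for $\lambda<\infty$, where $(\tau_2,\xi_2,q_2)=(\tau-\tau_1,\xi-\xi_1,q-q_1)$, and analogously for $\lambda=\infty$ with the sum over $q_1$ replaced by an integral over $\eta_1\in\mathbb{R}$ (and no factor $1/\lambda$). Then $$\|MP_\lambda(u,v)\|_{L^2_{txy,\lambda}}\lesssim_{\epsilon,b_1,b_2}\|J_y^{\frac12+\epsilon}u\|_{X_{0,b_1,\lambda}}\|v\|_{X_{0,b_2,\lambda}}$$ for all $u,v$ with $J_y^{1/2+\epsilon}u\in X_{0,b_1,\lambda}$ and $v\in X_{0,b_2,\lambda}$, where the implicit constant is independent of $\lambda\in[1,\infty]$.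
   Context: Notation: $|(\xi,q)|^2:=3\xi^2+q^2$ (dilated norm), while $\langle z\rangle=(1+|z|_2^2)^{1/2}$ uses the Euclidean norm. For $\lambda\in(0,\infty)$, $\mathbb{T}_\lambda=\mathbb{R}/2\pi\lambda\mathbb{Z}$; $\mathbb{T}_\infty=\mathbb{R}$. For $f$ on $\mathbb{R}_t\times\mathbb{R}_x\times\mathbb{T}_{\lambda,y}$, $\hat f^\lambda(\tau,\xi,q)=\int_{\mathbb{R}^2}\int_{-\pi\lambda}^{\pi\lambda}e^{-i(t\tau+x\xi+yq)}f\,dy\,dx\,dt$, $q\in\mathbb{Z}/\lambda$ (for $\lambda=\infty$, $q=\eta\in\mathbb{R}$). With $\phi(\xi,q)=\xi(\xi^2+q^2)$, $\|f\|^2_{X_{s,b,\lambda}}=\frac{1}{(2\pi)^3\lambda}\int_{\mathbb{R}^2}\sum_{q\in\mathbb{Z}/\lambda}\langle(\xi,q)\rangle^{2s}\langle\tau-\phi(\xi,q)\rangle^{2b}|\hat f^\lambda|^2d\tau d\xi$ (for $\lambda=\infty$: $\frac1{(2\pi)^3}\int_{\mathbb{R}^3}$). $J_y^\sigma$ is the Fourier multiplier $\langle q\rangle^\sigma$ in $y$. $L^p_{txy,\lambda}=L^p(\mathbb{R}\times\mathbb{R}\times\mathbb{T}_\lambda)$. *)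

theory Defs
  imports "HOL-Analysis.Analysis"
begin

text \<open>Frequency variables are triples (tau, xi, q) :: real \<times> real \<times> real.
  For finite lambda, q ranges over the lattice Z/lambda.\<close>

definition lattice :: "real \<Rightarrow> real set" where
  "lattice lam = {q. \<exists>k::int. q = of_int k / lam}"

definition freq_measure :: "ereal \<Rightarrow> (real \<times> real \<times> real) measure" where
  "freq_measure lam =
     (if lam = \<infinity> then lborel \<Otimes>\<^sub>M lborel \<Otimes>\<^sub>M lborel
      else scale_measure (ennreal (1 / real_of_ereal lam))
             (lborel \<Otimes>\<^sub>M lborel \<Otimes>\<^sub>M count_space (lattice (real_of_ereal lam))))"

definition japanese :: "real \<Rightarrow> real" where
  "japanese z = sqrt (1 + z\<^sup>2)"

definition japanese2 :: "real \<Rightarrow> real \<Rightarrow> real" where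
  "japanese2 x y = sqrt (1 + x\<^sup>2 + y\<^sup>2)"

definition phase :: "real \<Rightarrow> real \<Rightarrow> real" where
  "phase xi q = xi * (xi\<^sup>2 + q\<^sup>2)"

text \<open>Squared X_{s,b,lambda} norm, expressed through the (space-time) Fourier transform f = \<hat>u^lambda.\<close>

definition Xsq :: "ereal \<Rightarrow> real \<Rightarrow> real \<Rightarrow> (real \<times> real \<times> real \<Rightarrow> complex) \<Rightarrow> ennreal" where
  "Xsq lam s b f =
     (\<integral>\<^sup>+ z. ennreal (japanese2 (fst (snd z)) (snd (snd z)) powr (2 * s)
                   * japanese (fst z - phase (fst (snd z)) (snd (snd z))) powr (2 * b)
                   * (cmod (f z))\<^sup>2) \<partial>freq_measure lam) / ennreal ((2 * pi) ^ 3)"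

text \<open>Squared X_{0,b,lambda} norm of J_y^sigma u, whose Fourier transform is <q>^sigma \<hat>u.\<close>

definition XJsq :: "ereal \<Rightarrow> real \<Rightarrow> real \<Rightarrow> (real \<times> real \<times> real \<Rightarrow> complex) \<Rightarrow> ennreal" where
  "XJsq lam \<sigma> b f = Xsq lam 0 b (\<lambda>z. complex_of_real (japanese (snd (snd z)) powr \<sigma>) * f z)"

text \<open>Squared L^2_{txy,lambda} norm via Plancherel: equals the X_{0,0,lambda} norm of the Fourier transform.\<close>

definition L2sq :: "ereal \<Rightarrow> (real \<times> real \<times> real \<Rightarrow> complex) \<Rightarrow> ennreal" where
  "L2sq lam F = Xsq lam 0 0 F"

definition mp_kernel :: "real \<times> real \<times> real \<Rightarrow> real \<times> real \<times> real \<Rightarrow> real" where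
  "mp_kernel z1 z2 =
     \<bar>(3 * (fst (snd z1))\<^sup>2 + (snd (snd z1))\<^sup>2) - (3 * (fst (snd z2))\<^sup>2 + (snd (snd z2))\<^sup>2)\<bar> powr (1/2)"

text \<open>Fourier transform of MP_lambda(u,v), given f = \<hat>u^lambda, g = \<hat>v^lambda.\<close>

definition MP_hat :: "ereal \<Rightarrow> (real \<times> real \<times> real \<Rightarrow> complex) \<Rightarrow> (real \<times> real \<times> real \<Rightarrow> complex)
                      \<Rightarrow> real \<times> real \<times> real \<Rightarrow> complex" where
  "MP_hat lam f g z =
     (LINT z1|freq_measure lam. complex_of_real (mp_kernel z1 (z - z1)) * f z1 * g (z - z1))"

end

theory Submission
  imports Defs
begin

lemma S1:
  fixes B :: "real \<Rightarrow> ennreal" and a :: real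
  assumes [measurable]: "B \<in> borel_measurable borel" and a: "a > 0"
  shows "(\<integral>\<^sup>+u. B (a * u\<^sup>2) * ennreal (2 * a * u) * indicator {0..} u \<partial>lborel) \<le> (\<integral>\<^sup>+x. B x \<partial>lborel)"
proof -
  let ?F = "\<lambda>n u. B (a * u\<^sup>2) * ennreal (2 * a * u) * indicator {0..real n} u"
  have inc: "incseq ?F"
    by (auto simp: incseq_def le_fun_def intro!: mult_left_mono split: split_indicator)
  have pt: "(SUP n. ?F n u) = B (a * u\<^sup>2) * ennreal (2 * a * u) * indicator {0..} u" for u
  proof -
    have "(SUP n. (indicator {0..real n} u :: ennreal)) = indicator {0..} u"
    proof (cases "u \<ge> 0")
      case True
      obtain n where "u \<le> real n" using real_arch_simple by blast
      then have "(SUP n. (indicator {0..real n} u :: ennreal)) = 1"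
        using True by (intro antisym SUP_upper2[of n]) (auto intro!: SUP_least split: split_indicator)
      then show ?thesis using True by simp
    qed auto
    then show ?thesis by (simp add: SUP_mult_left_ennreal[symmetric])
  qed
  have "(\<integral>\<^sup>+u. B (a * u\<^sup>2) * ennreal (2 * a * u) * indicator {0..} u \<partial>lborel) = (SUP n. integral\<^sup>N lborel (?F n))"
    by (subst nn_integral_monotone_convergence_SUP[OF inc, symmetric]) (auto simp: pt)
  also have "\<dots> \<le> (\<integral>\<^sup>+x. B x \<partial>lborel)"
  proof (rule SUP_least)
    fix n :: nat
    show "integral\<^sup>N lborel (?F n) \<le> (\<integral>\<^sup>+x. B x \<partial>lborel)"
    proof (cases "n = 0")
      case True
      then have "?F n = (\<lambda>_. 0)" by (auto split: split_indicator)
      then have "integral\<^sup>N lborel (?F n) = 0" by (simp only:) simp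
      then show ?thesis by simp
    next
      case False
      have "integral\<^sup>N lborel (?F n) = (\<integral>\<^sup>+x. B x * indicator {a * 0\<^sup>2..a * (real n)\<^sup>2} x \<partial>lborel)"
        using False a
        by (intro nn_integral_substitution_aux[where g="\<lambda>u. a * u\<^sup>2" and g'="\<lambda>u. 2 * a * u", symmetric])
           (auto intro!: derivative_eq_intros continuous_intros)
      also have "\<dots> \<le> (\<integral>\<^sup>+x. B x \<partial>lborel)"
        by (intro nn_integral_mono) (auto split: split_indicator)
      finally show ?thesis .
    qed
  qed
  finally show ?thesis .
qed

lemma S2:
  fixes B :: "real \<Rightarrow> ennreal" and \<alpha> \<beta> \<gamma> :: real
  assumes [measurable]: "B \<in> borel_measurable borel"
  shows "(\<integral>\<^sup>+x. ennreal \<bar>2 * \<alpha> * x + \<beta>\<bar> * B (\<alpha> * x\<^sup>2 + \<beta> * x + \<gamma>) \<partial>lborel) \<le> 2 * (\<integral>\<^sup>+x. B x \<partial>lborel)"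
proof (cases "\<alpha> = 0")
  case True
  show ?thesis
  proof (cases "\<beta> = 0")
    case True
    with \<open>\<alpha> = 0\<close> show ?thesis by simp
  next
    case False
    have "(\<integral>\<^sup>+x. B x \<partial>lborel) = ennreal \<bar>\<beta>\<bar> * (\<integral>\<^sup>+x. B (\<gamma> + \<beta> * x) \<partial>lborel)"
      using nn_integral_real_affine[OF assms False, of \<gamma>] by simp
    also have "\<dots> = (\<integral>\<^sup>+x. ennreal \<bar>2 * \<alpha> * x + \<beta>\<bar> * B (\<alpha> * x\<^sup>2 + \<beta> * x + \<gamma>) \<partial>lborel)"
      using True by (subst nn_integral_cmult[symmetric]) (auto simp: ac_simps)
    finally have "(\<integral>\<^sup>+x. B x \<partial>lborel) = (\<integral>\<^sup>+x. ennreal \<bar>2 * \<alpha> * x + \<beta>\<bar> * B (\<alpha> * x\<^sup>2 + \<beta> * x + \<gamma>) \<partial>lborel)" .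
    moreover have "(\<integral>\<^sup>+x. B x \<partial>lborel) \<le> 2 * (\<integral>\<^sup>+x. B x \<partial>lborel)"
      using mult_right_mono[of "1::ennreal" 2 "(\<integral>\<^sup>+x. B x \<partial>lborel)"] by simp
    ultimately show ?thesis by simp
  qed
next
  case False
  define x0 where "x0 = - \<beta> / (2 * \<alpha>)"
  define \<gamma>' where "\<gamma>' = \<gamma> - \<beta>\<^sup>2 / (4 * \<alpha>)"
  define s :: real where "s = (if \<alpha> > 0 then 1 else -1)"
  define a where "a = \<bar>\<alpha>\<bar>"
  have a: "a > 0" using False by (simp add: a_def)
  have s: "s \<noteq> 0" "\<bar>s\<bar> = 1" by (auto simp: s_def)
  have sa: "\<alpha> = s * a" using False by (auto simp: s_def a_def)
  define G where "G u = B (\<gamma>' + s * (a * u\<^sup>2)) * ennreal (2 * a * u) * indicator {0..} u" for u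
  have [measurable]: "G \<in> borel_measurable borel" unfolding G_def by measurable
  have quad: "\<alpha> * (x0 + u)\<^sup>2 + \<beta> * (x0 + u) + \<gamma> = \<gamma>' + \<alpha> * u\<^sup>2" for u
    using False unfolding x0_def \<gamma>'_def by (simp add: field_simps power2_eq_square)
  have sq: "\<alpha> * u\<^sup>2 = s * (a * u\<^sup>2)" for u using sa by simp
  have lin: "\<bar>2 * \<alpha> * (x0 + u) + \<beta>\<bar> = 2 * a * \<bar>u\<bar>" for u
    using False unfolding x0_def a_def by (simp add: field_simps abs_mult)
  have e1: "(\<integral>\<^sup>+x. ennreal \<bar>2 * \<alpha> * x + \<beta>\<bar> * B (\<alpha> * x\<^sup>2 + \<beta> * x + \<gamma>) \<partial>lborel)
      = (\<integral>\<^sup>+u. ennreal \<bar>2 * \<alpha> * (x0 + u) + \<beta>\<bar> * B (\<alpha> * (x0 + u)\<^sup>2 + \<beta> * (x0 + u) + \<gamma>) \<partial>lborel)"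
    using nn_integral_real_affine[of "\<lambda>x. ennreal \<bar>2 * \<alpha> * x + \<beta>\<bar> * B (\<alpha> * x\<^sup>2 + \<beta> * x + \<gamma>)" 1 x0] by simp
  have e2: "(\<integral>\<^sup>+u. ennreal (2 * a * \<bar>u\<bar>) * B (\<gamma>' + s * (a * u\<^sup>2)) \<partial>lborel) \<le> (\<integral>\<^sup>+u. G u + G (- u) \<partial>lborel)"
  proof (intro nn_integral_mono)
    fix u :: real
    show "ennreal (2 * a * \<bar>u\<bar>) * B (\<gamma>' + s * (a * u\<^sup>2)) \<le> G u + G (- u)"
    proof (cases "u \<ge> 0")
      case True
      then have "ennreal (2 * a * \<bar>u\<bar>) * B (\<gamma>' + s * (a * u\<^sup>2)) = G u"
        by (simp add: G_def mult.commute)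
      then show ?thesis by (simp add: add_increasing2)
    next
      case False
      then have "ennreal (2 * a * \<bar>u\<bar>) * B (\<gamma>' + s * (a * u\<^sup>2)) = G (- u)"
        by (simp add: G_def mult.commute)
      then show ?thesis by (simp add: add_increasing)
    qed
  qed
  have e3: "(\<integral>\<^sup>+u. G u + G (- u) \<partial>lborel) = (\<integral>\<^sup>+u. G u \<partial>lborel) + (\<integral>\<^sup>+u. G (- u) \<partial>lborel)"
    by (rule nn_integral_add) auto
  have e4: "(\<integral>\<^sup>+u. G (- u) \<partial>lborel) = (\<integral>\<^sup>+u. G u \<partial>lborel)"
    using nn_integral_real_affine[of G "-1" 0] by simp
  have 1: "(\<integral>\<^sup>+x. ennreal \<bar>2 * \<alpha> * x + \<beta>\<bar> * B (\<alpha> * x\<^sup>2 + \<beta> * x + \<gamma>) \<partial>lborel) \<le> 2 * (\<integral>\<^sup>+u. G u \<partial>lborel)"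
  proof -
    have e1': "(\<integral>\<^sup>+x. ennreal \<bar>2 * \<alpha> * x + \<beta>\<bar> * B (\<alpha> * x\<^sup>2 + \<beta> * x + \<gamma>) \<partial>lborel) = (\<integral>\<^sup>+u. ennreal (2 * a * \<bar>u\<bar>) * B (\<gamma>' + s * (a * u\<^sup>2)) \<partial>lborel)"
      using e1 unfolding quad lin by (simp only: sq)
    from e2 have "(\<integral>\<^sup>+x. ennreal \<bar>2 * \<alpha> * x + \<beta>\<bar> * B (\<alpha> * x\<^sup>2 + \<beta> * x + \<gamma>) \<partial>lborel) \<le> (\<integral>\<^sup>+u. G u \<partial>lborel) + (\<integral>\<^sup>+u. G (- u) \<partial>lborel)"
      unfolding e1'[symmetric] e3 .
    then show ?thesis unfolding e4 mult_2 .
  qed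
  have "(\<integral>\<^sup>+u. G u \<partial>lborel) \<le> (\<integral>\<^sup>+y. B (\<gamma>' + s * y) \<partial>lborel)"
    unfolding G_def by (rule S1[OF _ a]) measurable
  also have "(\<integral>\<^sup>+y. B (\<gamma>' + s * y) \<partial>lborel) = (\<integral>\<^sup>+x. B x \<partial>lborel)"
    using nn_integral_real_affine[OF assms s(1), of \<gamma>'] s(2) by simp
  finally have "(\<integral>\<^sup>+u. G u \<partial>lborel) \<le> (\<integral>\<^sup>+x. B x \<partial>lborel)" .
  then have "2 * (\<integral>\<^sup>+u. G u \<partial>lborel) \<le> 2 * (\<integral>\<^sup>+x. B x \<partial>lborel)" by (rule mult_left_mono) simp
  with 1 show ?thesis by (rule order_trans)
qed

lemma japanese_ge1: "japanese y \<ge> 1"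
  unfolding japanese_def by simp

lemma japanese_ge_abs: "japanese y \<ge> \<bar>y\<bar>"
  unfolding japanese_def by (simp add: real_le_rsqrt)

lemma japanese_pos: "japanese y > 0"
  using japanese_ge1[of y] by linarith

lemma japanese_measurable[measurable]: "japanese \<in> borel_measurable borel"
  unfolding japanese_def by measurable

lemma S3:
  fixes s :: real assumes s: "s > 1"
  shows "(\<integral>\<^sup>+y. ennreal (japanese y powr (-s)) \<partial>lborel) < \<infinity>"
proof -
  define I where "I = {-1..1::real}"
  have [measurable]: "I \<in> sets borel" by (simp add: I_def)
  define h where "h y = ennreal (indicator {1..} y * y powr (-s))" for y :: real
  have [measurable]: "h \<in> borel_measurable borel" unfolding h_def by measurable
  have hI: "(\<integral>\<^sup>+y. h y \<partial>lborel) = ennreal (1 / (s - 1))"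
  proof -
    have "((\<lambda>x. x powr (-s)) has_integral -(1 powr (-s+1)) / (-s+1)) {1..}"
      by (rule has_integral_powr_to_inf) (use s in auto)
    then have "integral\<^sup>N lborel (\<lambda>x. indicator {1..} x * x powr (-s)) = -(1 powr (-s+1)) / (-s+1)"
      by (intro nn_integral_has_integral_lebesgue[where f="\<lambda>x. x powr (-s)" and \<Omega>="{1..}"]) auto
    moreover have "-(1 powr (-s+1)) / (-s+1) = 1 / (s - 1)" using s by (simp add: field_simps)
    ultimately show ?thesis unfolding h_def by simp
  qed
  have pw: "ennreal (japanese y powr (-s)) \<le> indicator I y + h y + h (- y)" for y
  proof -
    have le1: "japanese y powr (-s) \<le> 1"
      using japanese_ge1[of y] s by (simp add: powr_minus divide_simps ge_one_powr_ge_zero)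
    consider "\<bar>y\<bar> \<le> 1" | "y > 1" | "y < -1" by linarith
    then show ?thesis
    proof cases
      case 1
      then have "ennreal (japanese y powr (-s)) \<le> indicator I y"
        using le1 by (auto simp: indicator_def I_def)
      then show ?thesis by (meson add_increasing2 order_trans zero_le le_iff_add)
    next
      case 2
      have "japanese y powr (-s) \<le> y powr (-s)"
        using 2 japanese_ge_abs[of y] s by (intro powr_mono2') auto
      then have "ennreal (japanese y powr (-s)) \<le> h y" using 2 by (simp add: h_def)
      then show ?thesis by (simp add: add_increasing add_increasing2)
    next
      case 3
      have "japanese y powr (-s) \<le> (-y) powr (-s)"
        using 3 japanese_ge_abs[of y] s by (intro powr_mono2') auto
      then have "ennreal (japanese y powr (-s)) \<le> h (-y)" using 3 by (simp add: h_def)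
      then show ?thesis by (simp add: add_increasing)
    qed
  qed
  have "(\<integral>\<^sup>+y. ennreal (japanese y powr (-s)) \<partial>lborel) \<le> (\<integral>\<^sup>+y. indicator I y + h y + h (- y) \<partial>lborel)"
    by (intro nn_integral_mono pw)
  also have "\<dots> = (\<integral>\<^sup>+y. indicator I y \<partial>lborel) + (\<integral>\<^sup>+y. h y \<partial>lborel) + (\<integral>\<^sup>+y. h (- y) \<partial>lborel)"
  proof -
    have m1: "(\<lambda>y. indicator I y + h y) \<in> borel_measurable lborel" by measurable
    have m2: "(\<lambda>y. h (-y)) \<in> borel_measurable lborel" by measurable
    have m3: "(indicator I :: real \<Rightarrow> ennreal) \<in> borel_measurable lborel" by measurable
    have m4: "h \<in> borel_measurable lborel" by measurable
    show ?thesis using nn_integral_add[OF m1 m2] nn_integral_add[OF m3 m4] by (metis (no_types, lifting))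
  qed
  also have "(\<integral>\<^sup>+y. h (- y) \<partial>lborel) = (\<integral>\<^sup>+y. h y \<partial>lborel)"
    using nn_integral_real_affine[of h "-1" 0] by simp
  also have "(\<integral>\<^sup>+y. indicator I y \<partial>lborel) = ennreal 2"
    by (subst nn_integral_indicator) (auto simp: I_def)
  finally have le: "(\<integral>\<^sup>+y. ennreal (japanese y powr (-s)) \<partial>lborel) \<le> ennreal 2 + (\<integral>\<^sup>+y. h y \<partial>lborel) + (\<integral>\<^sup>+y. h y \<partial>lborel)" .
  show ?thesis by (rule order_le_less_trans[OF le]) (simp add: hI)
qed

lemma phase_measurable[measurable (raw)]:
  assumes [measurable]: "f \<in> borel_measurable M" "g \<in> borel_measurable M"
  shows "(\<lambda>x. phase (f x) (g x)) \<in> borel_measurable M"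
  unfolding phase_def by measurable

lemma S4:
  fixes A B :: "real \<Rightarrow> ennreal" and \<tau> \<xi> q q1 :: real
  assumes [measurable]: "A \<in> borel_measurable borel" "B \<in> borel_measurable borel"
  shows "(\<integral>\<^sup>+\<xi>1. \<integral>\<^sup>+\<tau>1. ennreal \<bar>(3 * \<xi>1\<^sup>2 + q1\<^sup>2) - (3 * (\<xi> - \<xi>1)\<^sup>2 + (q - q1)\<^sup>2)\<bar>
            * A (\<tau>1 - phase \<xi>1 q1) * B (\<tau> - \<tau>1 - phase (\<xi> - \<xi>1) (q - q1)) \<partial>lborel \<partial>lborel)
         \<le> 2 * (\<integral>\<^sup>+x. A x \<partial>lborel) * (\<integral>\<^sup>+x. B x \<partial>lborel)"
proof -
  define q2 where "q2 = q - q1"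
  define c where "c \<xi>1 = ennreal \<bar>(3 * \<xi>1\<^sup>2 + q1\<^sup>2) - (3 * (\<xi> - \<xi>1)\<^sup>2 + q2\<^sup>2)\<bar>" for \<xi>1
  define P where "P \<xi>1 = phase \<xi>1 q1 + phase (\<xi> - \<xi>1) q2" for \<xi>1
  have cm: "(\<lambda>\<xi>1::real. ennreal \<bar>(3 * \<xi>1\<^sup>2 + q1\<^sup>2) - (3 * (\<xi> - \<xi>1)\<^sup>2 + q2\<^sup>2)\<bar>) \<in> borel_measurable borel"
    by measurable
  have Pm: "(\<lambda>\<xi>1. phase \<xi>1 q1 + phase (\<xi> - \<xi>1) q2) \<in> borel_measurable borel"
    by measurable
  have [measurable]: "c \<in> borel_measurable borel"
    using cm by (simp add: c_def[abs_def])
  have [measurable]: "P \<in> borel_measurable borel"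
    using Pm by (simp add: P_def[abs_def])
  have step_a: "(\<integral>\<^sup>+\<tau>1. c \<xi>1 * A (\<tau>1 - phase \<xi>1 q1) * B (\<tau> - \<tau>1 - phase (\<xi> - \<xi>1) q2) \<partial>lborel)
      = (\<integral>\<^sup>+s. c \<xi>1 * A s * B (\<tau> - s - P \<xi>1) \<partial>lborel)" for \<xi>1
    using nn_integral_real_affine[of "\<lambda>\<tau>1. c \<xi>1 * A (\<tau>1 - phase \<xi>1 q1) * B (\<tau> - \<tau>1 - phase (\<xi> - \<xi>1) q2)" 1 "phase \<xi>1 q1"]
    by (simp add: P_def algebra_simps)
  have "(\<integral>\<^sup>+\<xi>1. \<integral>\<^sup>+s. c \<xi>1 * A s * B (\<tau> - s - P \<xi>1) \<partial>lborel \<partial>lborel)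
      = (\<integral>\<^sup>+s. \<integral>\<^sup>+\<xi>1. c \<xi>1 * A s * B (\<tau> - s - P \<xi>1) \<partial>lborel \<partial>lborel)"
    by (rule lborel_pair.Fubini'[symmetric]) measurable
  also have "\<dots> = (\<integral>\<^sup>+s. A s * (\<integral>\<^sup>+\<xi>1. c \<xi>1 * B (\<tau> - s - P \<xi>1) \<partial>lborel) \<partial>lborel)"
    by (rule nn_integral_cong, subst nn_integral_cmult[symmetric]) (auto simp: ac_simps)
  also have "\<dots> \<le> (\<integral>\<^sup>+s. A s * (2 * (\<integral>\<^sup>+x. B x \<partial>lborel)) \<partial>lborel)"
  proof (intro nn_integral_mono mult_left_mono)
    fix s
    have eq: "c \<xi>1 * B (\<tau> - s - P \<xi>1) = ennreal \<bar>2 * (-3 * \<xi>) * \<xi>1 + (3 * \<xi>\<^sup>2 - q1\<^sup>2 + q2\<^sup>2)\<bar>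
        * B ((-3 * \<xi>) * \<xi>1\<^sup>2 + (3 * \<xi>\<^sup>2 - q1\<^sup>2 + q2\<^sup>2) * \<xi>1 + (\<tau> - s - \<xi>^3 - \<xi> * q2\<^sup>2))" for \<xi>1
    proof -
      have 1: "\<bar>(3 * \<xi>1\<^sup>2 + q1\<^sup>2) - (3 * (\<xi> - \<xi>1)\<^sup>2 + q2\<^sup>2)\<bar> = \<bar>2 * (-3 * \<xi>) * \<xi>1 + (3 * \<xi>\<^sup>2 - q1\<^sup>2 + q2\<^sup>2)\<bar>"
        by (rule abs_minus_commute[THEN trans], rule arg_cong[where f=abs]) (simp add: power2_eq_square algebra_simps)
      have 2: "\<tau> - s - P \<xi>1 = (-3 * \<xi>) * \<xi>1\<^sup>2 + (3 * \<xi>\<^sup>2 - q1\<^sup>2 + q2\<^sup>2) * \<xi>1 + (\<tau> - s - \<xi>^3 - \<xi> * q2\<^sup>2)"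
        unfolding P_def phase_def by (simp add: power2_eq_square power3_eq_cube algebra_simps)
      show ?thesis unfolding c_def 1 2 ..
    qed
    show "(\<integral>\<^sup>+\<xi>1. c \<xi>1 * B (\<tau> - s - P \<xi>1) \<partial>lborel) \<le> 2 * (\<integral>\<^sup>+x. B x \<partial>lborel)"
      unfolding eq by (rule S2) fact
  qed simp
  also have "\<dots> = 2 * (\<integral>\<^sup>+x. A x \<partial>lborel) * (\<integral>\<^sup>+x. B x \<partial>lborel)"
    by (subst nn_integral_multc) (auto simp: ac_simps)
  finally have *: "(\<integral>\<^sup>+\<xi>1. \<integral>\<^sup>+s. c \<xi>1 * A s * B (\<tau> - s - P \<xi>1) \<partial>lborel \<partial>lborel)
      \<le> 2 * (\<integral>\<^sup>+x. A x \<partial>lborel) * (\<integral>\<^sup>+x. B x \<partial>lborel)" .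
  show ?thesis
    using * unfolding step_a[symmetric] by (simp add: c_def q2_def)
qed

lemma MAIN:
  fixes M :: "(real \<times> real \<times> real) measure" and k :: "real \<times> real \<times> real \<Rightarrow> real \<times> real \<times> real \<Rightarrow> real"
    and w1 w2 :: "real \<times> real \<times> real \<Rightarrow> real" and f g :: "real \<times> real \<times> real \<Rightarrow> complex" and C0 :: real
  assumes sf: "sigma_finite_measure M"
    and sub: "(\<lambda>x. fst x - snd x) \<in> M \<Otimes>\<^sub>M M \<rightarrow>\<^sub>M M"
    and trans: "\<And>z1 H. z1 \<in> space M \<Longrightarrow> H \<in> borel_measurable M \<Longrightarrow> (\<integral>\<^sup>+z. H (z - z1) \<partial>M) = (\<integral>\<^sup>+z. H z \<partial>M)"
    and km[measurable]: "(\<lambda>x. k (fst x) (snd x)) \<in> borel_measurable (M \<Otimes>\<^sub>M M)"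
    and w1m[measurable]: "w1 \<in> borel_measurable M" and w2m[measurable]: "w2 \<in> borel_measurable M"
    and w1pos: "\<And>z. w1 z > 0" and w2pos: "\<And>z. w2 z > 0"
    and fm[measurable]: "f \<in> borel_measurable M" and gm[measurable]: "g \<in> borel_measurable M"
    and W: "\<And>z. z \<in> space M \<Longrightarrow> (\<integral>\<^sup>+z1. ennreal ((k z z1)\<^sup>2 / (w1 z1 * w2 (z - z1))) \<partial>M) \<le> ennreal C0"
    and C0: "C0 \<ge> 0"
    and Ffin: "(\<integral>\<^sup>+z. ennreal (w1 z * (cmod (f z))\<^sup>2) \<partial>M) < \<infinity>"
    and Gfin: "(\<integral>\<^sup>+z. ennreal (w2 z * (cmod (g z))\<^sup>2) \<partial>M) < \<infinity>"
  shows "(AE z in M. integrable M (\<lambda>z1. complex_of_real (k z z1) * f z1 * g (z - z1))) \<and>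
     (\<integral>\<^sup>+z. ennreal ((cmod (LINT z1|M. complex_of_real (k z z1) * f z1 * g (z - z1)))\<^sup>2) \<partial>M)
       \<le> ennreal C0 * (\<integral>\<^sup>+z. ennreal (w1 z * (cmod (f z))\<^sup>2) \<partial>M) * (\<integral>\<^sup>+z. ennreal (w2 z * (cmod (g z))\<^sup>2) \<partial>M)"
proof -
  interpret sigma_finite_measure M by fact
  interpret P: pair_sigma_finite M M ..
  have subc: "h \<in> borel_measurable M \<Longrightarrow> (\<lambda>x. h (fst x - snd x)) \<in> borel_measurable (M \<Otimes>\<^sub>M M)" for h :: "_ \<Rightarrow> 'b::topological_space"
    using measurable_comp[OF sub, of h] by (simp add: comp_def)
  define F1 where "F1 z1 = w1 z1 * (cmod (f z1))\<^sup>2" for z1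
  define F2 where "F2 z = w2 z * (cmod (g z))\<^sup>2" for z
  have F1m[measurable]: "F1 \<in> borel_measurable M" unfolding F1_def by measurable
  have F2m[measurable]: "F2 \<in> borel_measurable M" unfolding F2_def by measurable
  have F1pos: "F1 z \<ge> 0" for z unfolding F1_def using w1pos[of z] by simp
  have F2pos: "F2 z \<ge> 0" for z unfolding F2_def using w2pos[of z] by simp
  define H where "H x = ennreal (F1 (snd x)) * ennreal (F2 (fst x - snd x))" for x
  have Hm[measurable]: "H \<in> borel_measurable (M \<Otimes>\<^sub>M M)"
    unfolding H_def using subc[OF F2m] by measurable
  define S where "S z = (\<integral>\<^sup>+z1. H (z, z1) \<partial>M)" for z
  have Sm[measurable]: "S \<in> borel_measurable M"
    unfolding S_def using Hm by measurable
  define kf where "kf x = complex_of_real (k (fst x) (snd x)) * f (snd x) * g (fst x - snd x)" for x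
  have kfm[measurable]: "kf \<in> borel_measurable (M \<Otimes>\<^sub>M M)"
    unfolding kf_def using subc[OF gm] by measurable
  define N where "N z = (\<integral>\<^sup>+z1. ennreal (norm (kf (z, z1))) \<partial>M)" for z
  have normkf: "norm (kf (z, z1)) = \<bar>k z z1\<bar> * cmod (f z1) * cmod (g (z - z1))" for z z1
    by (simp add: kf_def norm_mult)
  have NS: "(N z)\<^sup>2 \<le> ennreal C0 * S z" if z: "z \<in> space M" for z
  proof -
    define a where "a z1 = ennreal (\<bar>k z z1\<bar> / sqrt (w1 z1 * w2 (z - z1)))" for z1
    define b where "b z1 = ennreal (sqrt (w1 z1 * w2 (z - z1)) * cmod (f z1) * cmod (g (z - z1)))" for z1
    have [measurable]: "k z \<in> borel_measurable M" using measurable_Pair2[OF km z] by simp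
    have [measurable]: "(\<lambda>x. w2 (z - x)) \<in> borel_measurable M" using measurable_Pair2[OF subc[OF w2m] z] by simp
    have [measurable]: "(\<lambda>x. g (z - x)) \<in> borel_measurable M" using measurable_Pair2[OF subc[OF gm] z] by simp
    have am: "a \<in> borel_measurable M"
      unfolding a_def[abs_def] by measurable
    have bm: "b \<in> borel_measurable M"
      unfolding b_def[abs_def] by measurable
    have pos: "w1 z1 * w2 (z - z1) > 0" for z1 using w1pos w2pos by simp
    have ab: "a z1 * b z1 = ennreal (norm (kf (z, z1)))" for z1
    proof -
      have "a z1 * b z1 = ennreal (\<bar>k z z1\<bar> / sqrt (w1 z1 * w2 (z - z1)) * (sqrt (w1 z1 * w2 (z - z1)) * cmod (f z1) * cmod (g (z - z1))))"
        unfolding a_def b_def using pos[of z1] by (simp add: ennreal_mult[symmetric])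
      also have "\<dots> = ennreal (norm (kf (z, z1)))"
        unfolding normkf using pos[of z1] w1pos[of z1] w2pos[of "z - z1"] by (simp add: field_simps)
      finally show ?thesis .
    qed
    have a2: "(a z1)\<^sup>2 = ennreal ((k z z1)\<^sup>2 / (w1 z1 * w2 (z - z1)))" for z1
      unfolding a_def using pos[of z1] by (simp add: ennreal_power power_divide)
    have b2: "(b z1)\<^sup>2 = H (z, z1)" for z1
    proof -
      have "(b z1)\<^sup>2 = ennreal ((sqrt (w1 z1 * w2 (z - z1)) * cmod (f z1) * cmod (g (z - z1)))\<^sup>2)"
        unfolding b_def using pos[of z1] by (simp add: ennreal_power)
      also have "\<dots> = ennreal (F1 z1 * F2 (z - z1))"
        using pos[of z1] by (simp add: F1_def F2_def power_mult_distrib ac_simps)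
      also have "\<dots> = H (z, z1)"
        unfolding H_def using F1pos F2pos by (simp add: ennreal_mult)
      finally show ?thesis .
    qed
    have "(N z)\<^sup>2 = (\<integral>\<^sup>+z1. a z1 * b z1 \<partial>M)\<^sup>2" unfolding N_def ab ..
    also have "\<dots> \<le> (\<integral>\<^sup>+z1. (a z1)\<^sup>2 \<partial>M) * (\<integral>\<^sup>+z1. (b z1)\<^sup>2 \<partial>M)"
      by (rule Cauchy_Schwarz_nn_integral[OF am bm])
    also have "\<dots> \<le> ennreal C0 * S z"
      unfolding a2 b2 S_def by (intro mult_right_mono W z) simp
    finally show ?thesis .
  qed
  have MPle: "ennreal (cmod (LINT z1|M. complex_of_real (k z z1) * f z1 * g (z - z1))) \<le> N z" for z
  proof (cases "integrable M (\<lambda>z1. kf (z, z1))")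
    case True
    then show ?thesis
      unfolding N_def using integral_norm_bound_ennreal[OF True] by (simp add: kf_def)
  next
    case False
    then have "(LINT z1|M. complex_of_real (k z z1) * f z1 * g (z - z1)) = 0"
      by (simp add: kf_def not_integrable_integral_eq)
    then show ?thesis by simp
  qed
  have intS: "(\<integral>\<^sup>+z. S z \<partial>M) = (\<integral>\<^sup>+z. ennreal (F1 z) \<partial>M) * (\<integral>\<^sup>+z. ennreal (F2 z) \<partial>M)"
  proof -
    have "(\<integral>\<^sup>+z. S z \<partial>M) = (\<integral>\<^sup>+z1. \<integral>\<^sup>+z. H (z, z1) \<partial>M \<partial>M)"
      unfolding S_def by (rule P.Fubini[symmetric]) (rule Hm)
    also have "\<dots> = (\<integral>\<^sup>+z1. ennreal (F1 z1) * (\<integral>\<^sup>+z. ennreal (F2 z) \<partial>M) \<partial>M)"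
    proof (rule nn_integral_cong)
      fix z1 assume z1: "z1 \<in> space M"
      have "(\<integral>\<^sup>+z. H (z, z1) \<partial>M) = ennreal (F1 z1) * (\<integral>\<^sup>+z. ennreal (F2 (z - z1)) \<partial>M)"
      proof -
        have [measurable]: "(\<lambda>z. F2 (z - z1)) \<in> borel_measurable M"
          using measurable_Pair1[OF subc[OF F2m] z1] by simp
        show ?thesis unfolding H_def by simp (rule nn_integral_cmult, measurable)
      qed
      also have "(\<integral>\<^sup>+z. ennreal (F2 (z - z1)) \<partial>M) = (\<integral>\<^sup>+z. ennreal (F2 z) \<partial>M)"
        by (rule trans[OF z1]) measurable
      finally show "(\<integral>\<^sup>+z. H (z, z1) \<partial>M) = ennreal (F1 z1) * (\<integral>\<^sup>+z. ennreal (F2 z) \<partial>M)" .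
    qed
    also have "\<dots> = (\<integral>\<^sup>+z. ennreal (F1 z) \<partial>M) * (\<integral>\<^sup>+z. ennreal (F2 z) \<partial>M)"
      by (rule nn_integral_multc) measurable
    finally show ?thesis .
  qed
  have L2: "(\<integral>\<^sup>+z. ennreal ((cmod (LINT z1|M. complex_of_real (k z z1) * f z1 * g (z - z1)))\<^sup>2) \<partial>M)
      \<le> (\<integral>\<^sup>+z. ennreal C0 * S z \<partial>M)"
  proof (rule nn_integral_mono)
    fix z assume z: "z \<in> space M"
    have "ennreal ((cmod (LINT z1|M. complex_of_real (k z z1) * f z1 * g (z - z1)))\<^sup>2)
        = (ennreal (cmod (LINT z1|M. complex_of_real (k z z1) * f z1 * g (z - z1))))\<^sup>2"
      by (simp add: ennreal_power)
    also have "\<dots> \<le> (N z)\<^sup>2" by (intro power_mono MPle) simp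
    also have "\<dots> \<le> ennreal C0 * S z" by (rule NS[OF z])
    finally show "ennreal ((cmod (LINT z1|M. complex_of_real (k z z1) * f z1 * g (z - z1)))\<^sup>2) \<le> ennreal C0 * S z" .
  qed
  also have "\<dots> = ennreal C0 * ((\<integral>\<^sup>+z. ennreal (F1 z) \<partial>M) * (\<integral>\<^sup>+z. ennreal (F2 z) \<partial>M))"
    by (subst nn_integral_cmult) (auto simp: intS)
  finally have part2: "(\<integral>\<^sup>+z. ennreal ((cmod (LINT z1|M. complex_of_real (k z z1) * f z1 * g (z - z1)))\<^sup>2) \<partial>M)
       \<le> ennreal C0 * (\<integral>\<^sup>+z. ennreal (w1 z * (cmod (f z))\<^sup>2) \<partial>M) * (\<integral>\<^sup>+z. ennreal (w2 z * (cmod (g z))\<^sup>2) \<partial>M)"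
    by (simp add: F1_def F2_def mult.assoc)
  have Sfin: "(\<integral>\<^sup>+z. S z \<partial>M) \<noteq> \<infinity>"
    unfolding intS using Ffin Gfin by (simp add: F1_def F2_def ennreal_mult_eq_top_iff less_top)
  have "AE z in M. S z \<noteq> \<infinity>"
    by (rule nn_integral_noteq_infinite[OF Sm Sfin])
  then have part1: "AE z in M. integrable M (\<lambda>z1. complex_of_real (k z z1) * f z1 * g (z - z1))"
  proof (rule AE_mp[OF _ AE_I2], intro impI)
    fix z assume z: "z \<in> space M" and Sz: "S z \<noteq> \<infinity>"
    have "(N z)\<^sup>2 < \<infinity>"
      using NS[OF z] Sz by (simp add: ennreal_mult_less_top order_le_less_trans less_top)
    then have Nfin: "N z < \<infinity>"
      by (simp add: power_less_top_ennreal)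
    show "integrable M (\<lambda>z1. complex_of_real (k z z1) * f z1 * g (z - z1))"
    proof (rule integrableI_bounded)
      show "(\<lambda>z1. complex_of_real (k z z1) * f z1 * g (z - z1)) \<in> borel_measurable M"
        using measurable_Pair2[OF kfm z] by (simp add: kf_def)
      show "(\<integral>\<^sup>+z1. ennreal (norm (complex_of_real (k z z1) * f z1 * g (z - z1))) \<partial>M) < \<infinity>"
        using Nfin by (simp add: N_def kf_def)
    qed
  qed
  show ?thesis using part1 part2 by blast
qed

lemma lattice_eq: "lam \<noteq> 0 \<Longrightarrow> lattice lam = range (\<lambda>k::int. of_int k / lam)"
  unfolding lattice_def by auto

lemma countable_lattice: "lam \<noteq> 0 \<Longrightarrow> countable (lattice lam)"
  by (simp add: lattice_eq)

lemma lattice_diff: "x \<in> lattice lam \<Longrightarrow> y \<in> lattice lam \<Longrightarrow> x - y \<in> lattice lam"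
  unfolding lattice_def by (auto, metis diff_divide_distrib of_int_diff)

lemma lattice_add: "x \<in> lattice lam \<Longrightarrow> y \<in> lattice lam \<Longrightarrow> x + y \<in> lattice lam"
  unfolding lattice_def by (auto, metis add_divide_distrib of_int_add)

lemma lattice_pre:
  fixes lam :: real assumes lam: "lam > 0"
  shows "(\<lambda>y. of_int \<lfloor>lam * y\<rfloor> / lam) -` {of_int k / lam} = {of_int k / lam ..< (of_int k + 1) / lam}"
proof (rule set_eqI)
  fix y
  have "of_int \<lfloor>lam * y\<rfloor> / lam = of_int k / lam \<longleftrightarrow> \<lfloor>lam * y\<rfloor> = k"
    using lam by (simp add: divide_cancel_right)
  also have "\<dots> \<longleftrightarrow> of_int k \<le> lam * y \<and> lam * y < of_int k + 1"
    by (rule floor_eq_iff)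
  also have "\<dots> \<longleftrightarrow> of_int k / lam \<le> y \<and> y < (of_int k + 1) / lam"
    using lam by (simp add: pos_divide_le_eq pos_less_divide_eq mult.commute)
  finally show "y \<in> (\<lambda>y. of_int \<lfloor>lam * y\<rfloor> / lam) -` {of_int k / lam} \<longleftrightarrow> y \<in> {of_int k / lam ..< (of_int k + 1) / lam}"
    by simp
qed

lemma lattice_T_measurable:
  fixes lam :: real assumes lam: "lam > 0"
  shows "(\<lambda>y. of_int \<lfloor>lam * y\<rfloor> / lam) \<in> lborel \<rightarrow>\<^sub>M count_space (lattice lam)"
proof (subst measurable_count_space_eq_countable)
  let ?L = "lattice lam"
  let ?T = "\<lambda>y. of_int \<lfloor>lam * y\<rfloor> / lam"
  show "countable ?L" using lam by (simp add: countable_lattice)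
  show "?T \<in> space lborel \<rightarrow> ?L \<and> (\<forall>a\<in>?L. ?T -` {a} \<inter> space lborel \<in> sets lborel)"
  proof
    show "?T \<in> space lborel \<rightarrow> ?L" unfolding lattice_def by blast
    show "\<forall>a\<in>?L. ?T -` {a} \<inter> space lborel \<in> sets lborel"
    proof
      fix a assume "a \<in> ?L"
      then obtain k :: int where a: "a = of_int k / lam" unfolding lattice_def by blast
      show "?T -` {a} \<inter> space lborel \<in> sets lborel" unfolding a lattice_pre[OF lam] by simp
    qed
  qed
qed

lemma lattice_distr:
  fixes lam :: real assumes lam: "lam > 0"
  shows "distr lborel (count_space (lattice lam)) (\<lambda>y. of_int \<lfloor>lam * y\<rfloor> / lam)
       = scale_measure (ennreal (1 / lam)) (count_space (lattice lam))"
proof -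
  let ?L = "lattice lam"
  let ?T = "\<lambda>y. of_int \<lfloor>lam * y\<rfloor> / lam"
  note pre = lattice_pre[OF lam]
  have Tm: "?T \<in> lborel \<rightarrow>\<^sub>M count_space ?L"
    by (rule lattice_T_measurable[OF lam])
  show ?thesis
  proof (rule measure_eqI_countable)
    show "sets (distr lborel (count_space ?L) ?T) = Pow ?L" by simp
    show "sets (scale_measure (ennreal (1 / lam)) (count_space ?L)) = Pow ?L" by simp
    show "countable ?L" using lam by (simp add: countable_lattice)
    fix a assume "a \<in> ?L"
    then obtain k :: int where a: "a = of_int k / lam" unfolding lattice_def by auto
    have "emeasure (distr lborel (count_space ?L) ?T) {a} = emeasure lborel {of_int k / lam ..< (of_int k + 1) / lam}"
      using \<open>a \<in> ?L\<close> by (subst emeasure_distr[OF Tm]) (auto simp: a pre)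
    also have "\<dots> = ennreal (1 / lam)"
      using lam by (simp add: divide_simps)
    also have "\<dots> = emeasure (scale_measure (ennreal (1 / lam)) (count_space ?L)) {a}"
      using \<open>a \<in> ?L\<close> by (simp add: emeasure_scale_measure)
    finally show "emeasure (distr lborel (count_space ?L) ?T) {a} = emeasure (scale_measure (ennreal (1 / lam)) (count_space ?L)) {a}" .
  qed
qed

lemma japanese_norm: "japanese y = norm ((1::real), y)"
  unfolding japanese_def by (simp add: norm_Pair)

lemma japanese_lip: "japanese y \<le> japanese t + \<bar>y - t\<bar>"
proof -
  have "((1::real), y) = (1, t) + (0, y - t)" by simp
  then have "norm ((1::real), y) \<le> norm ((1::real), t) + norm ((0::real), y - t)"
    by (metis norm_triangle_ineq)
  then show ?thesis by (simp add: japanese_norm norm_Pair)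
qed

lemma lattice_sum_bound:
  fixes lam s :: real assumes lam: "lam \<ge> 1" and s: "s > 0"
  shows "ennreal (1 / lam) * (\<integral>\<^sup>+q. ennreal (japanese q powr (-s)) \<partial>count_space (lattice lam))
     \<le> ennreal (2 powr s) * (\<integral>\<^sup>+y. ennreal (japanese y powr (-s)) \<partial>lborel)"
proof -
  let ?L = "lattice lam"
  let ?T = "\<lambda>y. of_int \<lfloor>lam * y\<rfloor> / lam"
  have lam0: "lam > 0" using lam by simp
  note Tm = lattice_T_measurable[OF lam0]
  have "ennreal (1 / lam) * (\<integral>\<^sup>+q. ennreal (japanese q powr (-s)) \<partial>count_space ?L)
      = (\<integral>\<^sup>+q. ennreal (japanese q powr (-s)) \<partial>scale_measure (ennreal (1 / lam)) (count_space ?L))"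
    by (rule nn_integral_scale_measure[symmetric]) simp
  also have "\<dots> = (\<integral>\<^sup>+q. ennreal (japanese q powr (-s)) \<partial>distr lborel (count_space ?L) ?T)"
    unfolding lattice_distr[OF lam0] ..
  also have "\<dots> = (\<integral>\<^sup>+y. ennreal (japanese (?T y) powr (-s)) \<partial>lborel)"
    by (rule nn_integral_distr[OF Tm]) simp
  also have "\<dots> \<le> (\<integral>\<^sup>+y. ennreal (2 powr s) * ennreal (japanese y powr (-s)) \<partial>lborel)"
  proof (rule nn_integral_mono)
    fix y :: real
    have fl: "of_int \<lfloor>lam * y\<rfloor> \<le> lam * y" "lam * y < of_int \<lfloor>lam * y\<rfloor> + 1"
      by linarith+
    have d: "\<bar>y - ?T y\<bar> \<le> 1"
    proof -
      have "0 \<le> y - ?T y" using fl lam0 by (simp add: divide_simps mult.commute)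
      moreover have "y - ?T y \<le> 1 / lam" using fl lam0 by (simp add: divide_simps mult.commute) (use fl in linarith)
      moreover have "1 / lam \<le> 1" using lam by simp
      ultimately show ?thesis by linarith
    qed
    have "japanese y \<le> 2 * japanese (?T y)"
      using japanese_lip[of y "?T y"] d japanese_ge1[of "?T y"] by linarith
    then have "japanese y / 2 \<le> japanese (?T y)" by simp
    then have "japanese (?T y) powr (-s) \<le> (japanese y / 2) powr (-s)"
      using s japanese_pos[of y] by (intro powr_mono2') auto
    also have "\<dots> = 2 powr s * japanese y powr (-s)"
      using japanese_pos[of y] by (simp add: powr_divide powr_minus divide_simps)
    finally show "ennreal (japanese (?T y) powr (-s)) \<le> ennreal (2 powr s) * ennreal (japanese y powr (-s))"
      by (simp add: ennreal_mult[symmetric])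
  qed
  also have "\<dots> = ennreal (2 powr s) * (\<integral>\<^sup>+y. ennreal (japanese y powr (-s)) \<partial>lborel)"
    by (rule nn_integral_cmult) measurable
  finally show ?thesis .
qed

definition wt1 :: "real \<Rightarrow> real \<Rightarrow> real \<times> real \<times> real \<Rightarrow> real" where
  "wt1 \<sigma> b z = japanese (snd (snd z)) powr (2 * \<sigma>) * japanese (fst z - phase (fst (snd z)) (snd (snd z))) powr (2 * b)"

definition wt2 :: "real \<Rightarrow> real \<times> real \<times> real \<Rightarrow> real" where
  "wt2 b z = japanese (fst z - phase (fst (snd z)) (snd (snd z))) powr (2 * b)"

lemma japanese_ne0[simp]: "japanese y \<noteq> 0" using japanese_pos[of y] by simp
lemma wt1_pos: "wt1 \<sigma> b z > 0" unfolding wt1_def by simp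
lemma wt2_pos: "wt2 b z > 0" unfolding wt2_def by simp

lemma wt1_meas: "wt1 \<sigma> b \<in> borel_measurable (lborel \<Otimes>\<^sub>M lborel \<Otimes>\<^sub>M lborel)"
  unfolding wt1_def[abs_def] by measurable
lemma wt2_meas: "wt2 b \<in> borel_measurable (lborel \<Otimes>\<^sub>M lborel \<Otimes>\<^sub>M lborel)"
  unfolding wt2_def[abs_def] by measurable

lemma kern_meas: "(\<lambda>x. mp_kernel (snd x) (fst x - snd x)) \<in>
    borel_measurable ((lborel \<Otimes>\<^sub>M lborel \<Otimes>\<^sub>M lborel) \<Otimes>\<^sub>M (lborel \<Otimes>\<^sub>M lborel \<Otimes>\<^sub>M lborel))"
  unfolding mp_kernel_def by simp measurable

locale nu_setting =
  fixes \<nu> :: "real measure"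
  assumes nsf: "sigma_finite_measure \<nu>"
    and nid: "(\<lambda>x. x) \<in> \<nu> \<rightarrow>\<^sub>M lborel"
    and nsub: "(\<lambda>x. fst x - snd x) \<in> \<nu> \<Otimes>\<^sub>M \<nu> \<rightarrow>\<^sub>M \<nu>"
    and ndistr: "\<And>a. a \<in> space \<nu> \<Longrightarrow> distr \<nu> \<nu> (\<lambda>x. x - a) = \<nu>"
begin

abbreviation P :: "(real \<times> real \<times> real) measure" where "P \<equiv> lborel \<Otimes>\<^sub>M lborel \<Otimes>\<^sub>M \<nu>"
abbreviation "B3 \<equiv> (lborel \<Otimes>\<^sub>M lborel \<Otimes>\<^sub>M lborel :: (real \<times> real \<times> real) measure)"

lemma sfP: "sigma_finite_measure P"
  by (intro sigma_finite_pair_measure nsf lborel.sigma_finite_measure_axioms)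

lemma qm: "(\<lambda>z. snd (snd z)) \<in> P \<rightarrow>\<^sub>M lborel"
  using measurable_comp[OF measurable_comp[OF measurable_snd measurable_snd] nid] by (simp add: comp_def)

lemma iota: "(\<lambda>z. z) \<in> P \<rightarrow>\<^sub>M B3"
proof -
  have [measurable]: "(\<lambda>z. snd (snd z)) \<in> P \<rightarrow>\<^sub>M lborel" by (rule qm)
  have "(\<lambda>z. (fst z, fst (snd z), snd (snd z))) \<in> P \<rightarrow>\<^sub>M B3" by measurable
  then show ?thesis by simp
qed

lemma iota2: "(\<lambda>x. x) \<in> P \<Otimes>\<^sub>M P \<rightarrow>\<^sub>M B3 \<Otimes>\<^sub>M B3"
proof -
  have [measurable]: "(\<lambda>z. z) \<in> P \<rightarrow>\<^sub>M B3" by (rule iota)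
  have "(\<lambda>x. (fst x, snd x)) \<in> P \<Otimes>\<^sub>M P \<rightarrow>\<^sub>M B3 \<Otimes>\<^sub>M B3"
    by (intro measurable_Pair; rule measurable_comp[OF _ iota, unfolded comp_def]) measurable
  then show ?thesis by simp
qed

lemma fromB3: "h \<in> borel_measurable B3 \<Longrightarrow> h \<in> borel_measurable P"
  using measurable_comp[OF iota] by (simp add: comp_def)

lemma fromB3B3: "h \<in> borel_measurable (B3 \<Otimes>\<^sub>M B3) \<Longrightarrow> h \<in> borel_measurable (P \<Otimes>\<^sub>M P)"
  using measurable_comp[OF iota2] by (simp add: comp_def)

lemma subP: "(\<lambda>x. fst x - snd x) \<in> P \<Otimes>\<^sub>M P \<rightarrow>\<^sub>M P"
proof -
  have q2: "(\<lambda>x. snd (snd (fst x)) - snd (snd (snd x))) \<in> P \<Otimes>\<^sub>M P \<rightarrow>\<^sub>M \<nu>"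
  proof -
    have "(\<lambda>x. (snd (snd (fst x)), snd (snd (snd x)))) \<in> P \<Otimes>\<^sub>M P \<rightarrow>\<^sub>M \<nu> \<Otimes>\<^sub>M \<nu>"
      by measurable
    from measurable_comp[OF this nsub] show ?thesis by (simp add: comp_def)
  qed
  have r1: "(\<lambda>x. fst (fst x) - fst (snd x)) \<in> P \<Otimes>\<^sub>M P \<rightarrow>\<^sub>M lborel" by measurable
  have r2: "(\<lambda>x. fst (snd (fst x)) - fst (snd (snd x))) \<in> P \<Otimes>\<^sub>M P \<rightarrow>\<^sub>M lborel" by measurable
  have m: "(\<lambda>x. (fst (fst x) - fst (snd x), fst (snd (fst x)) - fst (snd (snd x)), snd (snd (fst x)) - snd (snd (snd x)))) \<in> P \<Otimes>\<^sub>M P \<rightarrow>\<^sub>M P"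
    by (intro measurable_Pair r1 r2 q2)
  have eq: "(\<lambda>x::(real \<times> real \<times> real) \<times> (real \<times> real \<times> real). fst x - snd x) = (\<lambda>x. (fst (fst x) - fst (snd x), fst (snd (fst x)) - fst (snd (snd x)), snd (snd (fst x)) - snd (snd (snd x))))"
    by (auto simp: fun_eq_iff prod_eq_iff)
  show ?thesis by (subst eq) (rule m)
qed

lemma shiftm: "a \<in> space \<nu> \<Longrightarrow> (\<lambda>x. x - a) \<in> \<nu> \<rightarrow>\<^sub>M \<nu>"
  using measurable_comp[OF measurable_Pair2'[of a \<nu> \<nu>] nsub] by (simp add: comp_def)

lemma distrP: assumes z1: "z1 \<in> space P" shows "distr P P (\<lambda>z. z - z1) = P"
proof -
  define a where "a = fst z1"
  define b where "b = fst (snd z1)"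
  define d where "d = snd (snd z1)"
  have zz: "z1 = (a, b, d)" by (simp add: a_def b_def d_def)
  have d: "d \<in> space \<nu>" using z1 by (simp add: zz space_pair_measure)
  have lb: "distr lborel lborel (\<lambda>x. x - t) = lborel" for t :: real
  proof -
    have "distr lborel lborel (\<lambda>x. x - t) = distr lborel borel ((+) (- t))"
      by (rule distr_cong) auto
    then show ?thesis using lborel_distr_plus[of "- t"] by simp
  qed
  interpret nsf: sigma_finite_measure \<nu> by (rule nsf)
  have sf2: "sigma_finite_measure (lborel \<Otimes>\<^sub>M \<nu>)"
    by (intro sigma_finite_pair_measure nsf lborel.sigma_finite_measure_axioms)
  have inner: "distr (lborel \<Otimes>\<^sub>M \<nu>) (lborel \<Otimes>\<^sub>M \<nu>) (\<lambda>(x, y). (x - b, y - d)) = lborel \<Otimes>\<^sub>M \<nu>"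
  proof -
    have mf: "(\<lambda>x::real. x - b) \<in> lborel \<rightarrow>\<^sub>M lborel" by measurable
    have sfd: "sigma_finite_measure (distr \<nu> \<nu> (\<lambda>y. y - d))" by (simp add: ndistr[OF d] nsf)
    from pair_measure_distr[OF mf shiftm[OF d] sfd] show ?thesis
      by (simp add: lb ndistr[OF d])
  qed
  have innerm: "(\<lambda>(x, y). (x - b, y - d)) \<in> lborel \<Otimes>\<^sub>M \<nu> \<rightarrow>\<^sub>M lborel \<Otimes>\<^sub>M \<nu>"
    using shiftm[OF d] by measurable
  have "distr P P (\<lambda>(x, y). (x - a, (\<lambda>(x, y). (x - b, y - d)) y)) = P"
  proof -
    have mf: "(\<lambda>x::real. x - a) \<in> lborel \<rightarrow>\<^sub>M lborel" by measurable
    have sfd: "sigma_finite_measure (distr (lborel \<Otimes>\<^sub>M \<nu>) (lborel \<Otimes>\<^sub>M \<nu>) (\<lambda>(x, y). (x - b, y - d)))"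
      by (simp add: inner sf2)
    from pair_measure_distr[OF mf innerm sfd] show ?thesis
      by (simp add: lb inner)
  qed
  moreover have "(\<lambda>(x, y). (x - a, (\<lambda>(x, y). (x - b, y - d)) y)) = (\<lambda>z. z - z1)"
    by (auto simp: zz fun_eq_iff prod_eq_iff split_beta)
  ultimately show ?thesis by simp
qed

end

lemma sf_scale:
  assumes "sigma_finite_measure M" "r \<noteq> \<infinity>"
  shows "sigma_finite_measure (scale_measure r M)"
proof -
  interpret sigma_finite_measure M by fact
  obtain A where A: "countable A" "A \<subseteq> sets M" "\<Union>A = space M" "\<forall>a\<in>A. emeasure M a \<noteq> \<infinity>"
    using sigma_finite_countable by metis
  show ?thesis
    by standard (rule exI[of _ A], use A assms(2) in \<open>auto simp: space_scale_measure ennreal_mult_eq_top_iff\<close>)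
qed

definition IA :: "real \<Rightarrow> ennreal" where
  "IA b = (\<integral>\<^sup>+x. ennreal (japanese x powr (-(2 * b))) \<partial>lborel)"

lemma IA_fin: "b > 1/2 \<Longrightarrow> IA b < \<infinity>"
  unfolding IA_def using S3[of "2 * b"] by simp

lemma kernel_sq:
  "(mp_kernel z1 (z - z1))\<^sup>2 = \<bar>(3 * (fst (snd z1))\<^sup>2 + (snd (snd z1))\<^sup>2) - (3 * (fst (snd z) - fst (snd z1))\<^sup>2 + (snd (snd z) - snd (snd z1))\<^sup>2)\<bar>"
  unfolding mp_kernel_def by (simp add: powr_half_sqrt)

context nu_setting
begin

lemma W_bound:
  fixes c E \<sigma> b1 b2 :: real and z :: "real \<times> real \<times> real"
  assumes c: "c > 0"
    and E: "ennreal c * (\<integral>\<^sup>+q. ennreal (japanese q powr (-(2 * \<sigma>))) \<partial>\<nu>) \<le> ennreal E"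
    and z: "z \<in> space P"
  shows "(\<integral>\<^sup>+z1. ennreal ((mp_kernel z1 (z - z1))\<^sup>2 / (wt1 \<sigma> b1 z1 * wt2 b2 (z - z1))) \<partial>scale_measure (ennreal c) P)
     \<le> ennreal E * (2 * IA b1 * IA b2)"
proof -
  define \<tau> where "\<tau> = fst z"
  define \<xi> where "\<xi> = fst (snd z)"
  define q where "q = snd (snd z)"
  define A where "A x = ennreal (japanese x powr (-(2 * b1)))" for x
  define B where "B x = ennreal (japanese x powr (-(2 * b2)))" for x
  define X where "X \<tau>1 \<xi>1 q1 = ennreal \<bar>(3 * \<xi>1\<^sup>2 + q1\<^sup>2) - (3 * (\<xi> - \<xi>1)\<^sup>2 + (q - q1)\<^sup>2)\<bar>
            * A (\<tau>1 - phase \<xi>1 q1) * B (\<tau> - \<tau>1 - phase (\<xi> - \<xi>1) (q - q1))" for \<tau>1 \<xi>1 q1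
  define jq where "jq q1 = ennreal (japanese q1 powr (-(2 * \<sigma>)))" for q1
  define G' where "G' z1 = jq (snd (snd z1)) * X (fst z1) (fst (snd z1)) (snd (snd z1))" for z1
  have Am[measurable]: "A \<in> borel_measurable borel" unfolding A_def[abs_def] by measurable
  have Bm[measurable]: "B \<in> borel_measurable borel" unfolding B_def[abs_def] by measurable
  have jqm[measurable]: "jq \<in> borel_measurable borel" unfolding jq_def[abs_def] by measurable
  have Xm[measurable]: "(\<lambda>x. X (fst x) (fst (snd x)) (snd (snd x))) \<in> borel_measurable B3"
    unfolding X_def by measurable
  have G'B3: "G' \<in> borel_measurable B3" unfolding G'_def[abs_def] by measurable
  have G'm[measurable]: "G' \<in> borel_measurable P" by (rule fromB3[OF G'B3])
  have pt: "ennreal ((mp_kernel z1 (z - z1))\<^sup>2 / (wt1 \<sigma> b1 z1 * wt2 b2 (z - z1))) = G' z1" for z1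
  proof -
    define D where "D = \<bar>(3 * (fst (snd z1))\<^sup>2 + (snd (snd z1))\<^sup>2) - (3 * (\<xi> - fst (snd z1))\<^sup>2 + (q - snd (snd z1))\<^sup>2)\<bar>"
    define u where "u = japanese (snd (snd z1)) powr (2 * \<sigma>)"
    define v where "v = japanese (fst z1 - phase (fst (snd z1)) (snd (snd z1))) powr (2 * b1)"
    define w where "w = japanese (\<tau> - fst z1 - phase (\<xi> - fst (snd z1)) (q - snd (snd z1))) powr (2 * b2)"
    have k2: "(mp_kernel z1 (z - z1))\<^sup>2 = D" unfolding kernel_sq D_def \<xi>_def q_def ..
    have w12: "wt1 \<sigma> b1 z1 * wt2 b2 (z - z1) = u * v * w"
      unfolding wt1_def wt2_def u_def v_def w_def \<tau>_def \<xi>_def q_def by simp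
    have pos: "u > 0" "v > 0" "w > 0" unfolding u_def v_def w_def by simp_all
    have "D / (u * v * w) = inverse u * (D * inverse v * inverse w)"
      using pos by (simp add: field_simps)
    moreover have "inverse u = japanese (snd (snd z1)) powr (-(2 * \<sigma>))"
      unfolding u_def by (simp add: powr_minus)
    moreover have "inverse v = japanese (fst z1 - phase (fst (snd z1)) (snd (snd z1))) powr (-(2 * b1))"
      unfolding v_def by (simp add: powr_minus)
    moreover have "inverse w = japanese (\<tau> - fst z1 - phase (\<xi> - fst (snd z1)) (q - snd (snd z1))) powr (-(2 * b2))"
      unfolding w_def by (simp add: powr_minus)
    ultimately have "D / (u * v * w) = japanese (snd (snd z1)) powr (-(2 * \<sigma>)) * (D * japanese (fst z1 - phase (fst (snd z1)) (snd (snd z1))) powr (-(2 * b1))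
         * japanese (\<tau> - fst z1 - phase (\<xi> - fst (snd z1)) (q - snd (snd z1))) powr (-(2 * b2)))" by simp
    then show ?thesis
      unfolding k2 w12 G'_def jq_def X_def A_def B_def D_def by (simp add: ennreal_mult)
  qed
  have "(\<integral>\<^sup>+z1. ennreal ((mp_kernel z1 (z - z1))\<^sup>2 / (wt1 \<sigma> b1 z1 * wt2 b2 (z - z1))) \<partial>scale_measure (ennreal c) P)
      = (\<integral>\<^sup>+z1. G' z1 \<partial>scale_measure (ennreal c) P)" by (simp only: pt)
  also have "\<dots> = ennreal c * (\<integral>\<^sup>+z1. G' z1 \<partial>P)"
    by (rule nn_integral_scale_measure) (rule G'm)
  also have "(\<integral>\<^sup>+z1. G' z1 \<partial>P) \<le> (\<integral>\<^sup>+q1. jq q1 \<partial>\<nu>) * (2 * IA b1 * IA b2)"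
  proof -
    interpret nsf: sigma_finite_measure \<nu> by (rule nsf)
    have sf2: "sigma_finite_measure (lborel \<Otimes>\<^sub>M \<nu>)"
      by (intro sigma_finite_pair_measure nsf lborel.sigma_finite_measure_axioms)
    interpret p1: pair_sigma_finite lborel "lborel \<Otimes>\<^sub>M \<nu>"
      unfolding pair_sigma_finite_def using sf2 lborel.sigma_finite_measure_axioms by simp
    interpret p2: pair_sigma_finite lborel \<nu>
      unfolding pair_sigma_finite_def using nsf lborel.sigma_finite_measure_axioms by simp
    have G'm2: "G' \<in> borel_measurable (lborel \<Otimes>\<^sub>M (lborel \<Otimes>\<^sub>M \<nu>))" using G'm by simp
    have "(\<integral>\<^sup>+z1. G' z1 \<partial>P) = (\<integral>\<^sup>+y. (\<integral>\<^sup>+\<tau>1. G' (\<tau>1, y) \<partial>lborel) \<partial>(lborel \<Otimes>\<^sub>M \<nu>))"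
      by (rule p1.nn_integral_snd[symmetric]) (rule G'm2)
    also have "\<dots> = (\<integral>\<^sup>+q1. (\<integral>\<^sup>+\<xi>1. (\<integral>\<^sup>+\<tau>1. G' (\<tau>1, \<xi>1, q1) \<partial>lborel) \<partial>lborel) \<partial>\<nu>)"
    proof -
      have m: "(\<lambda>y. \<integral>\<^sup>+\<tau>1. G' (\<tau>1, y) \<partial>lborel) \<in> borel_measurable (lborel \<Otimes>\<^sub>M \<nu>)"
        using G'm2 by measurable
      show ?thesis using p2.nn_integral_snd[OF m] by simp
    qed
    also have "\<dots> \<le> (\<integral>\<^sup>+q1. jq q1 * (2 * IA b1 * IA b2) \<partial>\<nu>)"
    proof (rule nn_integral_mono)
      fix q1
      have "(\<integral>\<^sup>+\<xi>1. (\<integral>\<^sup>+\<tau>1. G' (\<tau>1, \<xi>1, q1) \<partial>lborel) \<partial>lborel)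
          = (\<integral>\<^sup>+\<xi>1. jq q1 * (\<integral>\<^sup>+\<tau>1. X \<tau>1 \<xi>1 q1 \<partial>lborel) \<partial>lborel)"
      proof (rule nn_integral_cong)
        fix \<xi>1
        have "(\<lambda>\<tau>1. X \<tau>1 \<xi>1 q1) \<in> borel_measurable lborel" unfolding X_def by measurable
        then show "(\<integral>\<^sup>+\<tau>1. G' (\<tau>1, \<xi>1, q1) \<partial>lborel) = jq q1 * (\<integral>\<^sup>+\<tau>1. X \<tau>1 \<xi>1 q1 \<partial>lborel)"
          unfolding G'_def fst_conv snd_conv by (rule nn_integral_cmult)
      qed
      also have "\<dots> = jq q1 * (\<integral>\<^sup>+\<xi>1. (\<integral>\<^sup>+\<tau>1. X \<tau>1 \<xi>1 q1 \<partial>lborel) \<partial>lborel)"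
        by (rule nn_integral_cmult) (simp add: X_def)
      also have "\<dots> \<le> jq q1 * (2 * IA b1 * IA b2)"
      proof (rule mult_left_mono)
        have "(\<integral>\<^sup>+\<xi>1. (\<integral>\<^sup>+\<tau>1. X \<tau>1 \<xi>1 q1 \<partial>lborel) \<partial>lborel) \<le> 2 * (\<integral>\<^sup>+x. A x \<partial>lborel) * (\<integral>\<^sup>+x. B x \<partial>lborel)"
          unfolding X_def by (rule S4[OF Am Bm])
        then show "(\<integral>\<^sup>+\<xi>1. (\<integral>\<^sup>+\<tau>1. X \<tau>1 \<xi>1 q1 \<partial>lborel) \<partial>lborel) \<le> 2 * IA b1 * IA b2"
          by (simp add: IA_def A_def B_def)
      qed simp
      finally show "(\<integral>\<^sup>+\<xi>1. (\<integral>\<^sup>+\<tau>1. G' (\<tau>1, \<xi>1, q1) \<partial>lborel) \<partial>lborel) \<le> jq q1 * (2 * IA b1 * IA b2)" .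
    qed
    also have "\<dots> = (\<integral>\<^sup>+q1. jq q1 \<partial>\<nu>) * (2 * IA b1 * IA b2)"
    proof (rule nn_integral_multc)
      have "jq \<in> borel_measurable lborel" using jqm by simp
      from measurable_comp[OF nid this] show "jq \<in> borel_measurable \<nu>" by (simp add: comp_def)
    qed
    finally show ?thesis .
  qed
  then have "ennreal c * (\<integral>\<^sup>+z1. G' z1 \<partial>P) \<le> ennreal c * ((\<integral>\<^sup>+q1. jq q1 \<partial>\<nu>) * (2 * IA b1 * IA b2))"
    by (rule mult_left_mono) simp
  also have "\<dots> = (ennreal c * (\<integral>\<^sup>+q1. jq q1 \<partial>\<nu>)) * (2 * IA b1 * IA b2)" by (simp add: mult.assoc)
  also have "\<dots> \<le> ennreal E * (2 * IA b1 * IA b2)"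
    by (rule mult_right_mono) (use E in \<open>simp_all add: jq_def\<close>)
  finally show ?thesis .
qed

end

context nu_setting
begin

lemma PROD:
  fixes c E \<sigma> b1 b2 :: real and f g :: "real \<times> real \<times> real \<Rightarrow> complex"
  assumes c: "c > 0"
    and E: "ennreal c * (\<integral>\<^sup>+q. ennreal (japanese q powr (-(2 * \<sigma>))) \<partial>\<nu>) \<le> ennreal E"
    and E0: "E \<ge> 0" and b1: "b1 > 1/2" and b2: "b2 > 1/2"
    and fm: "f \<in> borel_measurable (scale_measure (ennreal c) P)"
    and gm: "g \<in> borel_measurable (scale_measure (ennreal c) P)"
    and Ffin: "(\<integral>\<^sup>+z. ennreal (wt1 \<sigma> b1 z * (cmod (f z))\<^sup>2) \<partial>scale_measure (ennreal c) P) < \<infinity>"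
    and Gfin: "(\<integral>\<^sup>+z. ennreal (wt2 b2 z * (cmod (g z))\<^sup>2) \<partial>scale_measure (ennreal c) P) < \<infinity>"
  shows "(AE z in scale_measure (ennreal c) P. integrable (scale_measure (ennreal c) P)
            (\<lambda>z1. complex_of_real (mp_kernel z1 (z - z1)) * f z1 * g (z - z1))) \<and>
     (\<integral>\<^sup>+z. ennreal ((cmod (LINT z1|scale_measure (ennreal c) P. complex_of_real (mp_kernel z1 (z - z1)) * f z1 * g (z - z1)))\<^sup>2) \<partial>scale_measure (ennreal c) P)
       \<le> ennreal (E * 2 * enn2real (IA b1) * enn2real (IA b2))
          * (\<integral>\<^sup>+z. ennreal (wt1 \<sigma> b1 z * (cmod (f z))\<^sup>2) \<partial>scale_measure (ennreal c) P)
          * (\<integral>\<^sup>+z. ennreal (wt2 b2 z * (cmod (g z))\<^sup>2) \<partial>scale_measure (ennreal c) P)"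
proof (rule MAIN[where k="\<lambda>z z1. mp_kernel z1 (z - z1)"])
  let ?M = "scale_measure (ennreal c) P"
  have setsM: "sets ?M = sets P" by simp
  have setsMM: "sets (?M \<Otimes>\<^sub>M ?M) = sets (P \<Otimes>\<^sub>M P)" by (rule sets_pair_measure_cong) simp_all
  show "sigma_finite_measure ?M" by (rule sf_scale[OF sfP]) simp
  show "(\<lambda>x. fst x - snd x) \<in> ?M \<Otimes>\<^sub>M ?M \<rightarrow>\<^sub>M ?M"
    unfolding measurable_cong_sets[OF setsMM setsM] by (rule subP)
  show "(\<lambda>x. mp_kernel (snd x) (fst x - snd x)) \<in> borel_measurable (?M \<Otimes>\<^sub>M ?M)"
    unfolding measurable_cong_sets[OF setsMM refl] by (rule fromB3B3[OF kern_meas])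
  show "wt1 \<sigma> b1 \<in> borel_measurable ?M"
    unfolding measurable_cong_sets[OF setsM refl] by (rule fromB3[OF wt1_meas])
  show "wt2 b2 \<in> borel_measurable ?M"
    unfolding measurable_cong_sets[OF setsM refl] by (rule fromB3[OF wt2_meas])
  show "\<And>z. wt1 \<sigma> b1 z > 0" by (rule wt1_pos)
  show "\<And>z. wt2 b2 z > 0" by (rule wt2_pos)
  show "f \<in> borel_measurable ?M" "g \<in> borel_measurable ?M" by (fact fm, fact gm)
  show "E * 2 * enn2real (IA b1) * enn2real (IA b2) \<ge> 0" using E0 by simp
  show "(\<integral>\<^sup>+z. ennreal (wt1 \<sigma> b1 z * (cmod (f z))\<^sup>2) \<partial>?M) < \<infinity>" by (fact Ffin)
  show "(\<integral>\<^sup>+z. ennreal (wt2 b2 z * (cmod (g z))\<^sup>2) \<partial>?M) < \<infinity>" by (fact Gfin)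
  show "(\<integral>\<^sup>+z. H (z - z1) \<partial>?M) = (\<integral>\<^sup>+z. H z \<partial>?M)" if z1: "z1 \<in> space ?M" and Hm: "H \<in> borel_measurable ?M" for z1 H
  proof -
    have z1P: "z1 \<in> space P" using z1 by (simp add: space_scale_measure)
    have HP: "H \<in> borel_measurable P" using Hm by (simp add: measurable_cong_sets[OF setsM refl])
    have Tm: "(\<lambda>z. z - z1) \<in> P \<rightarrow>\<^sub>M P"
      using measurable_comp[OF measurable_Pair2'[OF z1P, of P] subP] by (simp add: comp_def)
    have HTm: "(\<lambda>z. H (z - z1)) \<in> borel_measurable P"
      using measurable_comp[OF Tm HP] by (simp add: comp_def)
    have "(\<integral>\<^sup>+z. H (z - z1) \<partial>?M) = ennreal c * (\<integral>\<^sup>+z. H (z - z1) \<partial>P)"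
      by (rule nn_integral_scale_measure[OF HTm])
    also have "(\<integral>\<^sup>+z. H (z - z1) \<partial>P) = (\<integral>\<^sup>+z. H z \<partial>distr P P (\<lambda>z. z - z1))"
    proof -
      have "H \<in> borel_measurable (distr P P (\<lambda>z. z - z1))" using HP by simp
      from nn_integral_distr[OF Tm this] show ?thesis by simp
    qed
    also have "\<dots> = (\<integral>\<^sup>+z. H z \<partial>P)" by (simp only: distrP[OF z1P])
    also have "ennreal c * (\<integral>\<^sup>+z. H z \<partial>P) = (\<integral>\<^sup>+z. H z \<partial>?M)"
      by (rule nn_integral_scale_measure[OF HP, symmetric])
    finally show ?thesis .
  qed
  show "(\<integral>\<^sup>+z1. ennreal ((mp_kernel z1 (z - z1))\<^sup>2 / (wt1 \<sigma> b1 z1 * wt2 b2 (z - z1))) \<partial>?M)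
          \<le> ennreal (E * 2 * enn2real (IA b1) * enn2real (IA b2))" if z: "z \<in> space ?M" for z
  proof -
    have zP: "z \<in> space P" using z by (simp add: space_scale_measure)
    have "ennreal E * (2 * IA b1 * IA b2) = ennreal (E * 2 * enn2real (IA b1) * enn2real (IA b2))"
    proof -
      have 1: "IA b1 = ennreal (enn2real (IA b1))" using IA_fin[OF b1] by (simp add: less_top)
      have 2: "IA b2 = ennreal (enn2real (IA b2))" using IA_fin[OF b2] by (simp add: less_top)
      show ?thesis by (subst 1, subst 2) (simp add: ennreal_mult E0 mult.assoc)
    qed
    with W_bound[OF c E zP, of b1 b2] show ?thesis by simp
  qed
qed

end

lemma nu_lborel: "nu_setting lborel"
proof -
  have 1: "sigma_finite_measure lborel" by (rule lborel.sigma_finite_measure_axioms)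
  have 2: "(\<lambda>x. x) \<in> (lborel :: real measure) \<rightarrow>\<^sub>M lborel" by simp
  have 3: "(\<lambda>x. fst x - snd x) \<in> (lborel \<Otimes>\<^sub>M lborel :: (real \<times> real) measure) \<rightarrow>\<^sub>M lborel" by measurable
  have 4: "distr lborel lborel (\<lambda>x. x - a) = lborel" for a :: real
  proof -
    have "distr lborel lborel (\<lambda>x. x - a) = distr lborel borel ((+) (- a))"
      by (rule distr_cong) auto
    then show ?thesis using lborel_distr_plus[of "- a"] by simp
  qed
  show ?thesis by (rule nu_setting.intro[OF 1 2 3 4])
qed

lemma nu_lattice: assumes lam: "lam > 0" shows "nu_setting (count_space (lattice lam))"
proof -
  let ?L = "lattice lam"
  have cL: "countable ?L" using lam by (simp add: countable_lattice)
  have 1: "sigma_finite_measure (count_space ?L)" by (rule sigma_finite_measure_count_space_countable[OF cL])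
  have 2: "(\<lambda>x. x) \<in> count_space ?L \<rightarrow>\<^sub>M lborel" by simp
  have 3: "(\<lambda>x. fst x - snd x) \<in> count_space ?L \<Otimes>\<^sub>M count_space ?L \<rightarrow>\<^sub>M count_space ?L"
    unfolding pair_measure_countable[OF cL cL] by (auto intro: lattice_diff)
  have 4: "distr (count_space ?L) (count_space ?L) (\<lambda>x. x - a) = count_space ?L" if a: "a \<in> space (count_space ?L)" for a
  proof -
    have aL: "a \<in> ?L" using a by simp
    have "bij_betw (\<lambda>x. x - a) ?L ?L"
      by (rule bij_betwI[where g="\<lambda>x. x + a"]) (auto intro: lattice_diff lattice_add aL)
    then show ?thesis by (rule distr_bij_count_space)
  qed
  show ?thesis by (rule nu_setting.intro[OF 1 2 3 4])
qed

lemma japanese2_ne0[simp]: "japanese2 x y \<noteq> 0"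
proof -
  have "0 < 1 + x\<^sup>2 + y\<^sup>2" by (intro add_pos_nonneg) auto
  then show ?thesis unfolding japanese2_def by simp
qed

lemma Xsq_0: "Xsq lam 0 b g = (\<integral>\<^sup>+z. ennreal (wt2 b z * (cmod (g z))\<^sup>2) \<partial>freq_measure lam) / ennreal ((2 * pi) ^ 3)"
  unfolding Xsq_def wt2_def by simp

lemma XJsq_eq: "XJsq lam \<sigma> b f = (\<integral>\<^sup>+z. ennreal (wt1 \<sigma> b z * (cmod (f z))\<^sup>2) \<partial>freq_measure lam) / ennreal ((2 * pi) ^ 3)"
proof -
  have "wt2 b z * (cmod (complex_of_real (japanese (snd (snd z)) powr \<sigma>) * f z))\<^sup>2 = wt1 \<sigma> b z * (cmod (f z))\<^sup>2" for z
  proof -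
    have "(japanese (snd (snd z)) powr \<sigma>)\<^sup>2 = japanese (snd (snd z)) powr \<sigma> * japanese (snd (snd z)) powr \<sigma>"
      by (rule power2_eq_square)
    also have "\<dots> = japanese (snd (snd z)) powr (\<sigma> + \<sigma>)" by (rule powr_add[symmetric])
    also have "\<sigma> + \<sigma> = 2 * \<sigma>" by simp
    finally have "(japanese (snd (snd z)) powr \<sigma>)\<^sup>2 = japanese (snd (snd z)) powr (2 * \<sigma>)" .
    then show ?thesis
      unfolding wt1_def wt2_def by (simp add: norm_mult power_mult_distrib)
  qed
  then show ?thesis unfolding XJsq_def Xsq_0 by simp
qed

lemma L2sq_eq: "L2sq lam F = (\<integral>\<^sup>+z. ennreal ((cmod (F z))\<^sup>2) \<partial>freq_measure lam) / ennreal ((2 * pi) ^ 3)"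
  unfolding L2sq_def Xsq_0 wt2_def by simp

lemma div_D: "x / ennreal ((2 * pi) ^ 3) = x * ennreal (inverse ((2 * pi) ^ 3))"
  by (simp add: divide_ennreal_def inverse_ennreal)

lemma freq_cases:
  fixes lam :: ereal and \<sigma> :: real
  assumes lam: "1 \<le> lam" and \<sigma>: "\<sigma> > 1/2"
  obtains c \<nu> where "c > 0" "nu_setting \<nu>"
    "freq_measure lam = scale_measure (ennreal c) (lborel \<Otimes>\<^sub>M lborel \<Otimes>\<^sub>M \<nu>)"
    "ennreal c * (\<integral>\<^sup>+q. ennreal (japanese q powr (-(2 * \<sigma>))) \<partial>\<nu>) \<le> ennreal (2 powr (2 * \<sigma>) * enn2real (IA \<sigma>))"
proof (cases lam)
  case PInf
  have fin: "IA \<sigma> = ennreal (enn2real (IA \<sigma>))" using IA_fin[OF \<sigma>] by (simp add: less_top)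
  have "IA \<sigma> \<le> ennreal (2 powr (2 * \<sigma>) * enn2real (IA \<sigma>))"
  proof -
    have "1 \<le> 2 powr (2 * \<sigma>)" using \<sigma> by (simp add: ge_one_powr_ge_zero)
    then have "enn2real (IA \<sigma>) \<le> 2 powr (2 * \<sigma>) * enn2real (IA \<sigma>)"
      using mult_right_mono[of 1 "2 powr (2 * \<sigma>)" "enn2real (IA \<sigma>)"] by simp
    then show ?thesis by (subst fin) (simp add: ennreal_leI)
  qed
  then show ?thesis
    by (intro that[of 1 lborel]) (auto simp: PInf freq_measure_def nu_lborel IA_def)
next
  case (real r)
  have r: "r \<ge> 1" using lam real by simp
  have "ennreal (1 / r) * (\<integral>\<^sup>+q. ennreal (japanese q powr (-(2 * \<sigma>))) \<partial>count_space (lattice r))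
      \<le> ennreal (2 powr (2 * \<sigma>)) * IA \<sigma>"
    unfolding IA_def by (rule lattice_sum_bound[OF r]) (use \<sigma> in simp)
  also have "\<dots> = ennreal (2 powr (2 * \<sigma>) * enn2real (IA \<sigma>))"
    using IA_fin[OF \<sigma>] by (simp add: ennreal_mult less_top)
  finally show ?thesis
    using r by (intro that[of "1 / r" "count_space (lattice r)"]) (auto simp: real freq_measure_def nu_lattice)
next
  case MInf
  then show ?thesis using lam by simp
qed

theorem proposition3p1:
  fixes \<epsilon> b1 b2 :: real
  assumes "\<epsilon> > 0" and "b1 > 1/2" and "b2 > 1/2"
  shows "\<exists>C::real. C > 0 \<and>
    (\<forall>lam::ereal. \<forall>f g :: real \<times> real \<times> real \<Rightarrow> complex.
       1 \<le> lam \<longrightarrow>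
       f \<in> borel_measurable (freq_measure lam) \<longrightarrow>
       g \<in> borel_measurable (freq_measure lam) \<longrightarrow>
       XJsq lam (1/2 + \<epsilon>) b1 f < \<infinity> \<longrightarrow>
       Xsq lam 0 b2 g < \<infinity> \<longrightarrow>
       (AE z in freq_measure lam.
          integrable (freq_measure lam)
            (\<lambda>z1. complex_of_real (mp_kernel z1 (z - z1)) * f z1 * g (z - z1))) \<and>
       L2sq lam (MP_hat lam f g) \<le> ennreal C * XJsq lam (1/2 + \<epsilon>) b1 f * Xsq lam 0 b2 g)"
proof -
  note b1 = assms(2) and b2 = assms(3)
  define \<sigma> where "\<sigma> = 1/2 + \<epsilon>"
  have \<sigma>: "\<sigma> > 1/2" using assms(1) by (simp add: \<sigma>_def)
  define E where "E = 2 powr (2 * \<sigma>) * enn2real (IA \<sigma>)"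
  have E0: "E \<ge> 0" by (simp add: E_def)
  define C0 where "C0 = E * 2 * enn2real (IA b1) * enn2real (IA b2)"
  have C00: "C0 \<ge> 0" by (simp add: C0_def E0)
  define D :: real where "D = (2 * pi) ^ 3"
  have D0: "D > 0" by (simp add: D_def)
  define C where "C = C0 * D + 1"
  have C: "C > 0" using C00 D0 by (simp add: C_def add_nonneg_pos)
  show ?thesis
  proof (rule exI[of _ C], rule conjI[OF C], intro allI impI)
    fix lam :: ereal and f g :: "real \<times> real \<times> real \<Rightarrow> complex"
    assume lam: "1 \<le> lam" and fm: "f \<in> borel_measurable (freq_measure lam)"
      and gm: "g \<in> borel_measurable (freq_measure lam)"
      and XJ: "XJsq lam (1/2 + \<epsilon>) b1 f < \<infinity>" and Xg: "Xsq lam 0 b2 g < \<infinity>"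
    obtain c \<nu> where c: "c > 0" and nu: "nu_setting \<nu>"
      and Meq: "freq_measure lam = scale_measure (ennreal c) (lborel \<Otimes>\<^sub>M lborel \<Otimes>\<^sub>M \<nu>)"
      and Eb: "ennreal c * (\<integral>\<^sup>+q. ennreal (japanese q powr (-(2 * \<sigma>))) \<partial>\<nu>) \<le> ennreal E"
      using freq_cases[OF lam \<sigma>] unfolding E_def by metis
    interpret nu_setting \<nu> by (rule nu)
    define I1 where "I1 = (\<integral>\<^sup>+z. ennreal (wt1 \<sigma> b1 z * (cmod (f z))\<^sup>2) \<partial>freq_measure lam)"
    define I2 where "I2 = (\<integral>\<^sup>+z. ennreal (wt2 b2 z * (cmod (g z))\<^sup>2) \<partial>freq_measure lam)"
    define e where "e = ennreal (inverse D)"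
    have e0: "e > 0" using D0 by (simp add: e_def)
    have XJe: "XJsq lam (1/2 + \<epsilon>) b1 f = I1 * e"
      unfolding XJsq_eq div_D I1_def e_def D_def \<sigma>_def ..
    have Xge: "Xsq lam 0 b2 g = I2 * e"
      unfolding Xsq_0 div_D I2_def e_def D_def ..
    have I1fin: "I1 < \<infinity>" using XJ e0 unfolding XJe by (auto simp: ennreal_mult_less_top e_def)
    have I2fin: "I2 < \<infinity>" using Xg e0 unfolding Xge by (auto simp: ennreal_mult_less_top e_def)
    have P: "(AE z in scale_measure (ennreal c) P. integrable (scale_measure (ennreal c) P)
            (\<lambda>z1. complex_of_real (mp_kernel z1 (z - z1)) * f z1 * g (z - z1))) \<and>
     (\<integral>\<^sup>+z. ennreal ((cmod (LINT z1|scale_measure (ennreal c) P. complex_of_real (mp_kernel z1 (z - z1)) * f z1 * g (z - z1)))\<^sup>2) \<partial>scale_measure (ennreal c) P)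
       \<le> ennreal (E * 2 * enn2real (IA b1) * enn2real (IA b2))
          * (\<integral>\<^sup>+z. ennreal (wt1 \<sigma> b1 z * (cmod (f z))\<^sup>2) \<partial>scale_measure (ennreal c) P)
          * (\<integral>\<^sup>+z. ennreal (wt2 b2 z * (cmod (g z))\<^sup>2) \<partial>scale_measure (ennreal c) P)"
      by (rule PROD[OF c Eb E0 b1 b2]) (use fm gm I1fin I2fin in \<open>simp_all add: Meq I1_def I2_def\<close>)
    then have AEpart: "AE z in freq_measure lam. integrable (freq_measure lam)
            (\<lambda>z1. complex_of_real (mp_kernel z1 (z - z1)) * f z1 * g (z - z1))"
      and I0: "(\<integral>\<^sup>+z. ennreal ((cmod (MP_hat lam f g z))\<^sup>2) \<partial>freq_measure lam) \<le> ennreal C0 * I1 * I2"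
      unfolding Meq I1_def I2_def MP_hat_def C0_def by simp_all
    have "L2sq lam (MP_hat lam f g) = (\<integral>\<^sup>+z. ennreal ((cmod (MP_hat lam f g z))\<^sup>2) \<partial>freq_measure lam) * e"
      unfolding L2sq_eq div_D e_def D_def ..
    also have "\<dots> \<le> ennreal C0 * I1 * I2 * e" by (rule mult_right_mono[OF I0]) simp
    also have "\<dots> \<le> (ennreal C * e) * I1 * I2 * e"
    proof -
      have "C0 \<le> C * inverse D" using D0 C00 by (simp add: C_def field_simps)
      then have "ennreal C0 \<le> ennreal C * e"
        using D0 C by (simp add: e_def ennreal_mult[symmetric] ennreal_leI)
      then show ?thesis by (intro mult_right_mono) simp_all
    qed
    also have "\<dots> = ennreal C * XJsq lam (1/2 + \<epsilon>) b1 f * Xsq lam 0 b2 g"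
      unfolding XJe Xge by (simp add: ac_simps)
    finally show "(AE z in freq_measure lam. integrable (freq_measure lam)
            (\<lambda>z1. complex_of_real (mp_kernel z1 (z - z1)) * f z1 * g (z - z1))) \<and>
       L2sq lam (MP_hat lam f g) \<le> ennreal C * XJsq lam (1/2 + \<epsilon>) b1 f * Xsq lam 0 b2 g"
      using AEpart by simp
  qed
qed

end
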